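(* Let $P\subset\mathbb{R}^D$ be an $(\epsilon_1,\epsilon_2)$-significant instance of $k$-center clustering with $z$ outliers, $|P|=n$, and let $\eta,\delta\in(0,1)$. Consider the following algorithm: (1) sample a set $S$ of $\frac{3k}{\delta^2\epsilon_1}\log\frac{2k}{\eta}$ points uniformly at random from $P$; (2) let $z'=\frac{1}{\eta}\frac{\epsilon_2}{k}|S|$ and solve $k$-center clustering with $z'$ outliers on $S$ using any $c$-approximation algorithm with $c\ge 1$; output the set $H$ of $k$ returned centers. If $\frac{\epsilon_1}{\epsilon_2}>\frac{1}{\eta(1-\delta)}$, then with probability at least $(1-\eta)^2$, $\Delta^{-z}_{\infty}(P,H)\le(c+2)r_{opt}$.
   Context: For a finite $H\subset\mathbb{R}^D$ and a point $p$, $dist(p,H)=\min_{q\in H}\|p-q\|$. For a finite point set $Q$ and integer $0<w<|Q|$, $\Delta^{-w}_{\infty}(Q,H)=\min\{\max_{p\in Q'}dist(p,H): Q'\subset Q, |Q'|=|Q|-w\}$. The $k$-center clustering with $w$ outliers problem on $Q$ asks for $k$ centers $C\subset\mathbb{R}^D$ minimizing $\Delta^{-w}_{\infty}(Q,C)$; a $c$-approximation algorithm returns $k$ centers whose value is at most $c$ times the optimum. $r_{opt}$ is the optimal value for $P$ with $z$ outliers. $P_{opt}\subset P$ with $|P_{opt}|=n-z$ denotes the set of inliers of an optimal solution for $P$, and $C^*_1,\dots,C^*_k$ the optimal clusters forming $P_{opt}$. The instance is $(\epsilon_1,\epsilon_2)$-significant ($\epsilon_1,\epsilon_2>0$) if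 $\min_j|C^*_j|\ge\frac{\epsilon_1}{k}n$ and $z=\frac{\epsilon_2}{k}n$. Sampling uniformly at random means each sample point is drawn independently and uniformly from $P$ ($S$ is regarded as a multiset). *)

theory Defs
  imports "HOL-Analysis.Analysis" "HOL-Probability.Probability" "HOL-Library.Multiset"
begin

definition dist_set :: "'a::euclidean_space \<Rightarrow> 'a set \<Rightarrow> real" where
  "dist_set p H = Min ((\<lambda>q. dist p q) ` H)"

definition max_dist :: "'a::euclidean_space multiset \<Rightarrow> 'a set \<Rightarrow> real" where
  "max_dist Q' H = (if Q' = {#} then 0 else Max ((\<lambda>p. dist_set p H) ` set_mset Q'))"

definition Delta_out :: "'a::euclidean_space multiset \<Rightarrow> nat \<Rightarrow> 'a set \<Rightarrow> real" where
  "Delta_out Q w H = Min {max_dist Q' H | Q'. Q' \<subseteq># Q \<and> size Q' = size Q - w}"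

definition kcenter_opt :: "'a::euclidean_space multiset \<Rightarrow> nat \<Rightarrow> nat \<Rightarrow> real" where
  "kcenter_opt Q k w = Inf {Delta_out Q w C | C. finite C \<and> card C = k}"

definition significant ::
  "'a::euclidean_space set \<Rightarrow> nat \<Rightarrow> nat \<Rightarrow> real \<Rightarrow> real \<Rightarrow> bool" where
  "significant P k z \<epsilon>1 \<epsilon>2 \<longleftrightarrow>
     (let n = card P; r = kcenter_opt (mset_set P) k z in
      real z = \<epsilon>2 / real k * real n \<and>
      (\<exists>(cs :: nat \<Rightarrow> 'a) (Cl :: nat \<Rightarrow> 'a set) Popt.
          inj_on cs {..<k} \<and>
          Delta_out (mset_set P) z (cs ` {..<k}) = r \<and>
          Popt \<subseteq> P \<and> card Popt = n - z \<and>
          Popt = (\<Union>j<k. Cl j) \<and>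
          (\<forall>i<k. \<forall>j<k. i \<noteq> j \<longrightarrow> Cl i \<inter> Cl j = {}) \<and>
          (\<forall>j<k. \<forall>p\<in>Cl j. dist p (cs j) \<le> r) \<and>
          (\<forall>j<k. real (card (Cl j)) \<ge> \<epsilon>1 / real k * real n)))"

end

theory Submission
  imports Defs
begin

definition Ls :: "'a set \<Rightarrow> nat \<Rightarrow> 'a list set" where
  "Ls P m = {xs. set xs \<subseteq> P \<and> length xs = m}"

definition cnt :: "'a set \<Rightarrow> 'a list \<Rightarrow> nat" where
  "cnt C xs = length (filter (\<lambda>x. x \<in> C) xs)"

lemma cnt_Cons: "cnt C (x # xs) = (if x \<in> C then 1 else 0) + cnt C xs"
  by (simp add: cnt_def)

lemma finite_Ls: "finite P \<Longrightarrow> finite (Ls P m)"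
  unfolding Ls_def by (rule finite_lists_length_eq)

lemma card_Ls: "finite P \<Longrightarrow> card (Ls P m) = card P ^ m"
  unfolding Ls_def by (rule card_lists_length_eq)

lemma Ls_Suc: "Ls P (Suc m) = (\<lambda>(x,xs). x # xs) ` (P \<times> Ls P m)"
  unfolding Ls_def by (auto simp: length_Suc_conv image_iff)

lemma Ls_ne: "P \<noteq> {} \<Longrightarrow> Ls P m \<noteq> {}"
  unfolding Ls_def
proof -
  assume "P \<noteq> {}" then obtain x where "x \<in> P" by auto
  then show "{xs. set xs \<subseteq> P \<and> length xs = m} \<noteq> {}"
    by (auto intro!: exI[of _ "replicate m x"])
qed

lemma sum_Ls_Suc:
  assumes "finite P"
  shows "(\<Sum>xs\<in>Ls P (Suc m). f xs) = (\<Sum>x\<in>P. \<Sum>xs\<in>Ls P m. f (x # xs))"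
proof -
  have inj: "inj_on (\<lambda>(x,xs). x # xs) (P \<times> Ls P m)" by (auto simp: inj_on_def)
  have "(\<Sum>xs\<in>Ls P (Suc m). f xs) = (\<Sum>p\<in>P \<times> Ls P m. f ((\<lambda>(x,xs). x # xs) p))"
    unfolding Ls_Suc by (rule sum.reindex[OF inj, unfolded comp_def])
  also have "\<dots> = (\<Sum>x\<in>P. \<Sum>xs\<in>Ls P m. f (x # xs))"
    by (simp add: sum.cartesian_product split_def)
  finally show ?thesis .
qed

lemma pair_pmf_of_set:
  assumes "finite A" "A \<noteq> {}" "finite B" "B \<noteq> {}"
  shows "pair_pmf (pmf_of_set A) (pmf_of_set B) = pmf_of_set (A \<times> B)"
proof (rule pmf_eqI)
  fix p :: "'a \<times> 'b"
  obtain a b where p: "p = (a, b)" by (cases p)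
  show "pmf (pair_pmf (pmf_of_set A) (pmf_of_set B)) p = pmf (pmf_of_set (A \<times> B)) p"
    using assms by (simp add: p pmf_pair card_cartesian_product indicator_def)
qed

lemma replicate_pmf_of_set:
  assumes "finite P" "P \<noteq> {}"
  shows "replicate_pmf m (pmf_of_set P) = pmf_of_set (Ls P m)"
proof (induction m)
  case 0
  have "Ls P 0 = {[]}" by (auto simp: Ls_def)
  then show ?case by (simp add: pmf_of_set_singleton)
next
  case (Suc m)
  have "replicate_pmf (Suc m) (pmf_of_set P) =
        map_pmf (\<lambda>(x,xs). x # xs) (pair_pmf (pmf_of_set P) (pmf_of_set (Ls P m)))"
    by (simp add: Suc pair_pmf_def map_bind_pmf bind_return_pmf map_pmf_def bind_assoc_pmf)
  also have "\<dots> = map_pmf (\<lambda>(x,xs). x # xs) (pmf_of_set (P \<times> Ls P m))"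
    using assms by (simp add: pair_pmf_of_set finite_Ls Ls_ne)
  also have "\<dots> = pmf_of_set (Ls P (Suc m))"
    unfolding Ls_Suc using assms
    by (intro map_pmf_of_set_inj) (auto simp: inj_on_def finite_Ls Ls_ne)
  finally show ?case .
qed

lemma prob_replicate:
  assumes "finite P" "P \<noteq> {}"
  shows "measure_pmf.prob (replicate_pmf m (pmf_of_set P)) E = card (Ls P m \<inter> E) / card P ^ m"
  using assms by (simp add: replicate_pmf_of_set measure_pmf_of_set finite_Ls Ls_ne card_Ls)

lemma sum_pow_cnt:
  fixes t :: real
  assumes "finite P" "C \<subseteq> P"
  shows "(\<Sum>xs\<in>Ls P m. t ^ cnt C xs) = (real (card P) - real (card C) + real (card C) * t) ^ m"
proof (induction m)
  case 0
  have "Ls P 0 = {[]}" by (auto simp: Ls_def)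
  then show ?case by (simp add: cnt_def)
next
  case (Suc m)
  have fin: "finite C" using assms finite_subset by blast
  have "(\<Sum>x\<in>P. t ^ (if x \<in> C then 1 else 0)) = (\<Sum>x\<in>C. t) + (\<Sum>x\<in>P - C. 1)"
    using assms by (subst sum.subset_diff[of C P]) (auto intro!: sum.cong)
  also have "\<dots> = real (card P) - real (card C) + real (card C) * t"
    using assms fin by (simp add: card_Diff_subset of_nat_diff card_mono)
  finally have e: "(\<Sum>x\<in>P. t ^ (if x \<in> C then 1 else 0)) = real (card P) - real (card C) + real (card C) * t" .
  have "(\<Sum>xs\<in>Ls P (Suc m). t ^ cnt C xs) = (\<Sum>x\<in>P. \<Sum>xs\<in>Ls P m. t ^ (if x \<in> C then 1 else 0) * t ^ cnt C xs)"
    using assms by (simp add: sum_Ls_Suc cnt_Cons power_add)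
  also have "\<dots> = (\<Sum>x\<in>P. t ^ (if x \<in> C then 1 else 0)) * (\<Sum>xs\<in>Ls P m. t ^ cnt C xs)"
    by (rule sum_product[symmetric])
  finally show ?case using Suc e by simp
qed

lemma sum_cnt:
  assumes "finite P" "C \<subseteq> P"
  shows "real (card P) * (\<Sum>xs\<in>Ls P m. real (cnt C xs)) = real m * real (card C) * real (card P) ^ m"
proof (induction m)
  case 0
  have "Ls P 0 = {[]}" by (auto simp: Ls_def)
  then show ?case by (simp add: cnt_def)
next
  case (Suc m)
  have fin: "finite C" using assms finite_subset by blast
  have e: "(\<Sum>x\<in>P. (if x \<in> C then 1 else 0 :: real)) = real (card C)"
    using assms fin by (simp add: sum.If_cases Int_absorb1)
  have "(\<Sum>xs\<in>Ls P (Suc m). real (cnt C xs)) =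
        (\<Sum>x\<in>P. \<Sum>xs\<in>Ls P m. (if x \<in> C then 1 else 0) + real (cnt C xs))"
    using assms by (simp add: sum_Ls_Suc cnt_Cons) (auto intro!: sum.cong)
  also have "\<dots> = (\<Sum>x\<in>P. (if x \<in> C then 1 else 0) * real (card P ^ m) + (\<Sum>xs\<in>Ls P m. real (cnt C xs)))"
    using assms by (simp add: sum.distrib card_Ls mult.commute)
  also have "\<dots> = real (card C) * real (card P) ^ m + real (card P) * (\<Sum>xs\<in>Ls P m. real (cnt C xs))"
    by (simp add: sum.distrib sum_distrib_right[symmetric] e)
  finally show ?case using Suc by (simp add: algebra_simps)
qed

lemma card_le_pow_cnt:
  fixes t :: real
  assumes "finite P" "0 < t" "t \<le> 1"
  shows "real (card {xs\<in>Ls P m. cnt C xs \<le> a}) * t ^ a \<le> (\<Sum>xs\<in>Ls P m. t ^ cnt C xs)"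
proof -
  have "real (card {xs\<in>Ls P m. cnt C xs \<le> a}) * t ^ a = (\<Sum>xs\<in>{xs\<in>Ls P m. cnt C xs \<le> a}. t ^ a)"
    by simp
  also have "\<dots> \<le> (\<Sum>xs\<in>{xs\<in>Ls P m. cnt C xs \<le> a}. t ^ cnt C xs)"
    using assms by (intro sum_mono power_decreasing) auto
  also have "\<dots> \<le> (\<Sum>xs\<in>Ls P m. t ^ cnt C xs)"
    using assms by (intro sum_mono2 finite_Ls) auto
  finally show ?thesis .
qed

lemma card_ge_cnt:
  assumes "finite P" "C \<subseteq> P" "a > 0"
  shows "real (card P) * real (card {xs\<in>Ls P m. cnt C xs \<ge> a}) * real a \<le> real m * real (card C) * real (card P) ^ m"
proof -
  have "real (card {xs\<in>Ls P m. cnt C xs \<ge> a}) * real a = (\<Sum>xs\<in>{xs\<in>Ls P m. cnt C xs \<ge> a}. real a)"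
    by simp
  also have "\<dots> \<le> (\<Sum>xs\<in>{xs\<in>Ls P m. cnt C xs \<ge> a}. real (cnt C xs))"
    by (intro sum_mono) auto
  also have "\<dots> \<le> (\<Sum>xs\<in>Ls P m. real (cnt C xs))"
    using assms by (intro sum_mono2 finite_Ls) auto
  finally have "real (card P) * (real (card {xs\<in>Ls P m. cnt C xs \<ge> a}) * real a) \<le> real (card P) * (\<Sum>xs\<in>Ls P m. real (cnt C xs))"
    by (intro mult_left_mono) auto
  then show ?thesis using sum_cnt[OF assms(1,2)] by (simp add: mult.assoc)
qed

lemma harris_1d:
  fixes F G :: "'a \<Rightarrow> real"
  assumes "finite P" "Ou \<subseteq> P"
    and F: "\<And>x. x \<in> P \<Longrightarrow> F x = (if x \<in> Ou then a else b)" and ab: "a \<le> b"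
    and G: "\<And>u y. u \<in> Ou \<Longrightarrow> y \<in> P \<Longrightarrow> G u \<le> G y"
  shows "(\<Sum>x\<in>P. F x) * (\<Sum>x\<in>P. G x) \<le> real (card P) * (\<Sum>x\<in>P. F x * G x)"
proof -
  define I where "I = P - Ou"
  have fO: "finite Ou" using assms finite_subset by blast
  have fI: "finite I" using assms unfolding I_def by auto
  have split: "(\<Sum>x\<in>P. h x) = (\<Sum>x\<in>Ou. h x) + (\<Sum>x\<in>I. h x)" for h :: "'a \<Rightarrow> real"
    unfolding I_def using assms by (simp add: sum.subset_diff[of Ou P])
  have cP: "real (card P) = real (card Ou) + real (card I)"
    unfolding I_def using assms fO by (simp add: card_Diff_subset of_nat_diff card_mono)
  define GO where "GO = (\<Sum>x\<in>Ou. G x)"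
  define GI where "GI = (\<Sum>x\<in>I. G x)"
  have sF: "(\<Sum>x\<in>P. F x) = a * real (card Ou) + b * real (card I)"
    unfolding split using F assms by (simp add: I_def subsetD)
  have sFG: "(\<Sum>x\<in>P. F x * G x) = a * GO + b * GI"
    unfolding split GO_def GI_def using F assms by (simp add: I_def subsetD sum_distrib_left)
  have sG: "(\<Sum>x\<in>P. G x) = GO + GI" unfolding split GO_def GI_def ..
  have "(\<Sum>u\<in>Ou. \<Sum>y\<in>I. G y - G u) = real (card Ou) * GI - real (card I) * GO"
    by (simp add: sum_subtractf GO_def GI_def sum_distrib_left sum_distrib_right mult.commute)
  moreover have "(\<Sum>u\<in>Ou. \<Sum>y\<in>I. G y - G u) \<ge> 0"
    using G assms by (intro sum_nonneg) (auto simp: I_def)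
  ultimately have D: "real (card Ou) * GI - real (card I) * GO \<ge> 0" by simp
  have "real (card P) * (\<Sum>x\<in>P. F x * G x) - (\<Sum>x\<in>P. F x) * (\<Sum>x\<in>P. G x)
        = (b - a) * (real (card Ou) * GI - real (card I) * GO)"
    unfolding sF sFG sG cP by (simp add: algebra_simps)
  also have "\<dots> \<ge> 0" using D ab by simp
  finally show ?thesis by simp
qed

lemma harris:
  assumes "finite P" "Ou \<subseteq> P"
  shows "\<forall>\<phi> g. (\<forall>a b. a \<le> b \<longrightarrow> \<phi> b \<le> (\<phi> a :: real)) \<longrightarrow>
     (\<forall>xs\<in>Ls P m. \<forall>i<m. \<forall>u\<in>Ou. g (xs[i:=u]) \<le> (g xs :: real)) \<longrightarrow>
     (\<Sum>xs\<in>Ls P m. \<phi> (cnt Ou xs)) * (\<Sum>xs\<in>Ls P m. g xs)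
       \<le> real (card P) ^ m * (\<Sum>xs\<in>Ls P m. \<phi> (cnt Ou xs) * g xs)"
proof (induction m)
  case 0
  have "Ls P 0 = {[]}" by (auto simp: Ls_def)
  then show ?case by simp
next
  case (Suc m)
  show ?case
  proof (intro allI impI)
    fix \<phi> :: "nat \<Rightarrow> real" and g :: "'a list \<Rightarrow> real"
    assume phi: "\<forall>a b. a \<le> b \<longrightarrow> \<phi> b \<le> \<phi> a"
      and g: "\<forall>xs\<in>Ls P (Suc m). \<forall>i<Suc m. \<forall>u\<in>Ou. g (xs[i:=u]) \<le> g xs"
    define F where "F x = (\<Sum>xs\<in>Ls P m. \<phi> ((if x \<in> Ou then 1 else 0) + cnt Ou xs))" for x
    define G where "G x = (\<Sum>xs\<in>Ls P m. g (x # xs))" for x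
    have LsS: "x # xs \<in> Ls P (Suc m)" if "x \<in> P" "xs \<in> Ls P m" for x xs
      using that by (auto simp: Ls_def)
    have IH: "F x * G x \<le> real (card P) ^ m * (\<Sum>xs\<in>Ls P m. \<phi> (cnt Ou (x # xs)) * g (x # xs))"
      if x: "x \<in> P" for x
    proof -
      have "(\<Sum>xs\<in>Ls P m. (\<lambda>c. \<phi> ((if x \<in> Ou then 1 else 0) + c)) (cnt Ou xs)) * (\<Sum>xs\<in>Ls P m. (\<lambda>ys. g (x # ys)) xs)
          \<le> real (card P) ^ m * (\<Sum>xs\<in>Ls P m. (\<lambda>c. \<phi> ((if x \<in> Ou then 1 else 0) + c)) (cnt Ou xs) * (\<lambda>ys. g (x # ys)) xs)"
      proof -
        have A: "\<forall>a b. a \<le> b \<longrightarrow> \<phi> ((if x \<in> Ou then 1 else 0) + b) \<le> \<phi> ((if x \<in> Ou then 1 else 0) + a)"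
          using phi by auto
        have B: "\<forall>xs\<in>Ls P m. \<forall>i<m. \<forall>u\<in>Ou. g (x # xs[i := u]) \<le> g (x # xs)"
        proof (intro ballI allI impI)
          fix xs i u assume "xs \<in> Ls P m" "i < m" "u \<in> Ou"
          then have "g ((x # xs)[Suc i := u]) \<le> g (x # xs)" using g LsS x by blast
          then show "g (x # xs[i := u]) \<le> g (x # xs)" by simp
        qed
        show ?thesis
          using Suc[THEN spec[of _ "\<lambda>c. \<phi> ((if x \<in> Ou then 1 else 0) + c)"], THEN spec[of _ "\<lambda>ys. g (x # ys)"]] A B
          by simp
      qed
      then show ?thesis by (simp add: F_def G_def cnt_Cons)
    qed
    have "(\<Sum>xs\<in>Ls P (Suc m). \<phi> (cnt Ou xs)) * (\<Sum>xs\<in>Ls P (Suc m). g xs) = (\<Sum>x\<in>P. F x) * (\<Sum>x\<in>P. G x)"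
      using assms by (simp add: sum_Ls_Suc F_def G_def cnt_Cons)
    also have "\<dots> \<le> real (card P) * (\<Sum>x\<in>P. F x * G x)"
    proof (rule harris_1d[OF assms, where a = "F (SOME u. u \<in> Ou)" and b = "\<Sum>xs\<in>Ls P m. \<phi> (cnt Ou xs)"])
      show "F x = (if x \<in> Ou then F (SOME u. u \<in> Ou) else (\<Sum>xs\<in>Ls P m. \<phi> (cnt Ou xs)))" if "x \<in> P" for x
      proof (cases "x \<in> Ou")
        case True
        then have "(SOME u. u \<in> Ou) \<in> Ou" by (meson someI)
        then show ?thesis using True by (simp add: F_def)
      qed (simp add: F_def)
      show "F (SOME u. u \<in> Ou) \<le> (\<Sum>xs\<in>Ls P m. \<phi> (cnt Ou xs))"
        unfolding F_def using phi by (intro sum_mono) auto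
      show "G u \<le> G y" if "u \<in> Ou" "y \<in> P" for u y
        unfolding G_def
      proof (rule sum_mono)
        fix xs assume "xs \<in> Ls P m"
        then have "g ((y # xs)[0 := u]) \<le> g (y # xs)" using g LsS that by blast
        then show "g (u # xs) \<le> g (y # xs)" by simp
      qed
    qed
    also have "\<dots> \<le> real (card P) * (\<Sum>x\<in>P. real (card P) ^ m * (\<Sum>xs\<in>Ls P m. \<phi> (cnt Ou (x # xs)) * g (x # xs)))"
      using IH by (intro mult_left_mono sum_mono) auto
    also have "\<dots> = real (card P) ^ Suc m * (\<Sum>xs\<in>Ls P (Suc m). \<phi> (cnt Ou xs) * g xs)"
      using assms by (simp add: sum_Ls_Suc sum_distrib_left mult.assoc)
    finally show "(\<Sum>xs\<in>Ls P (Suc m). \<phi> (cnt Ou xs)) * (\<Sum>xs\<in>Ls P (Suc m). g xs)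
       \<le> real (card P) ^ Suc m * (\<Sum>xs\<in>Ls P (Suc m). \<phi> (cnt Ou xs) * g xs)" .
  qed
qed

lemma ln_ineq:
  fixes d :: real
  assumes "0 \<le> d" "d < 1"
  shows "- d + d^2 / 2 \<le> (1 - d) * ln (1 - d)"
proof -
  define f where "f x = (1 - x) * ln (1 - x) + x - x^2 / 2" for x :: real
  have "f 0 \<le> f d"
  proof (rule DERIV_nonneg_imp_nondecreasing[OF assms(1)])
    fix x :: real assume x0: "0 \<le> x" "x \<le> d"
    then have x: "0 \<le> x \<and> x \<le> d" by simp
    then have x1: "x < 1" using assms by auto
    have "(f has_real_derivative (- ln (1 - x) - x)) (at x)"
      unfolding f_def using x1
      by - (rule derivative_eq_intros refl | simp)+
    moreover have "ln (1 - x) \<le> - x" using ln_le_minus_one[of "1 - x"] x1 by simp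
    ultimately show "\<exists>y. (f has_real_derivative y) (at x) \<and> 0 \<le> y" by auto
  qed
  then show ?thesis by (simp add: f_def)
qed

lemma chernoff:
  fixes \<delta> \<mu> :: real
  assumes "finite P" "P \<noteq> {}" "C \<subseteq> P" "0 < \<delta>" "\<delta> < 1"
    and mu: "\<mu> = real m * real (card C) / real (card P)"
    and a: "real a \<le> (1 - \<delta>) * \<mu>"
  shows "real (card {xs\<in>Ls P m. cnt C xs \<le> a}) / real (card P) ^ m \<le> exp (- (\<delta>^2) * \<mu> / 2)"
proof -
  define n where "n = real (card P)"
  define q where "q = real (card C) / n"
  define t where "t = 1 - \<delta>"
  have n0: "n > 0" using assms by (simp add: n_def card_gt_0_iff)
  have cC: "card C \<le> card P" using assms by (simp add: card_mono)
  have q01: "0 \<le> q" "q \<le> 1" using cC n0 by (auto simp: q_def n_def field_simps)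
  have t: "0 < t" "t \<le> 1" using assms by (auto simp: t_def)
  have mu': "\<mu> = real m * q" by (simp add: mu q_def n_def)
  have mu0: "\<mu> \<ge> 0" using mu' q01 by simp
  have base: "real (card P) - real (card C) + real (card C) * t = n * (1 - q * \<delta>)"
    using n0 by (simp add: n_def q_def t_def field_simps)
  have "real (card {xs\<in>Ls P m. cnt C xs \<le> a}) * t ^ a \<le> (n * (1 - q * \<delta>)) ^ m"
    using card_le_pow_cnt[OF assms(1) t, of m C a] sum_pow_cnt[OF assms(1,3), of t m] base by simp
  also have "\<dots> = n ^ m * (1 - q * \<delta>) ^ m" by (simp add: power_mult_distrib)
  also have "(1 - q * \<delta>) ^ m \<le> exp (- q * \<delta>) ^ m"
  proof (rule power_mono)
    show "1 - q * \<delta> \<le> exp (- q * \<delta>)" using exp_ge_add_one_self[of "- q * \<delta>"] by simp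
    show "0 \<le> 1 - q * \<delta>" using q01 assms by (simp add: mult_le_one)
  qed
  also have "exp (- q * \<delta>) ^ m = exp (- \<delta> * \<mu>)"
    by (simp add: exp_of_nat_mult[symmetric] mu' algebra_simps)
  finally have c1: "real (card {xs\<in>Ls P m. cnt C xs \<le> a}) * t ^ a \<le> n ^ m * exp (- \<delta> * \<mu>)"
    using n0 by (simp add: mult_left_mono)
  have ta: "t ^ a = exp (real a * ln t)" using t by (simp add: exp_of_nat_mult)
  have lnt: "ln t \<le> 0" using t by simp
  have "exp ((1 - \<delta>) * \<mu> * ln t) \<le> t ^ a"
    unfolding ta using a lnt by (simp add: mult_right_mono_neg)
  have "real (card {xs\<in>Ls P m. cnt C xs \<le> a}) / n ^ m \<le> exp (- \<delta> * \<mu>) / t ^ a"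
    using c1 n0 t by (simp add: field_simps)
  also have "\<dots> \<le> exp (- \<delta> * \<mu>) / exp ((1 - \<delta>) * \<mu> * ln t)"
    using \<open>exp ((1 - \<delta>) * \<mu> * ln t) \<le> t ^ a\<close> t by (intro divide_left_mono) auto
  also have "\<dots> = exp (\<mu> * (- \<delta> - (1 - \<delta>) * ln (1 - \<delta>)))"
    by (simp add: exp_diff[symmetric] t_def algebra_simps)
  also have "\<dots> \<le> exp (\<mu> * (- (\<delta>^2) / 2))"
    using ln_ineq[of \<delta>] assms mu0 by (intro exp_mono mult_left_mono) auto
  finally show ?thesis by (simp add: n_def mult.commute)
qed

lemma finite_submsets: "finite {Q'. Q' \<subseteq># (Q :: 'b multiset)}"
proof -
  have "{Q'. Q' \<subseteq># Q} \<subseteq> mset ` {ys. set ys \<subseteq> set_mset Q \<and> length ys \<le> size Q}"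
  proof
    fix Q' assume "Q' \<in> {Q'. Q' \<subseteq># Q}"
    then have sub: "Q' \<subseteq># Q" by simp
    obtain ys where ys: "mset ys = Q'" using ex_mset by blast
    have "set ys \<subseteq> set_mset Q" using sub ys by (metis set_mset_mset set_mset_mono)
    moreover have "length ys \<le> size Q" using sub ys by (metis size_mset size_mset_mono)
    ultimately show "Q' \<in> mset ` {ys. set ys \<subseteq> set_mset Q \<and> length ys \<le> size Q}" using ys by blast
  qed
  moreover have "finite {ys. set ys \<subseteq> set_mset Q \<and> length ys \<le> size Q}"
    by (rule finite_lists_length_le) simp
  ultimately show ?thesis using finite_subset by blast
qed

lemma mset_take_sub: "mset (take n xs) \<subseteq># mset xs"
  by (metis append_take_drop_id mset_append mset_subset_eq_add_left)

lemma Delta_set_finite: "finite {max_dist Q' H | Q'. Q' \<subseteq># Q \<and> size Q' = size Q - w}"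
proof -
  have "{max_dist Q' H | Q'. Q' \<subseteq># Q \<and> size Q' = size Q - w} \<subseteq> (\<lambda>Q'. max_dist Q' H) ` {Q'. Q' \<subseteq># Q}"
    by auto
  then show ?thesis using finite_submsets finite_subset by blast
qed

lemma exists_sub_size: "\<exists>Q'. Q' \<subseteq># Q \<and> size Q' = size Q - w"
proof -
  obtain xs where xs: "mset xs = Q" using ex_mset by blast
  show ?thesis
    by (rule exI[of _ "mset (take (size Q - w) xs)"]) (use xs mset_take_sub in auto)
qed

lemma Delta_out_le:
  assumes "Q' \<subseteq># Q" "size Q' = size Q - w"
  shows "Delta_out Q w H \<le> max_dist Q' H"
  unfolding Delta_out_def using assms by (intro Min_le Delta_set_finite) auto

lemma Delta_out_attained:
  "\<exists>Q'. Q' \<subseteq># Q \<and> size Q' = size Q - w \<and> Delta_out Q w H = max_dist Q' H"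
proof -
  have ne: "{max_dist Q' H | Q'. Q' \<subseteq># Q \<and> size Q' = size Q - w} \<noteq> {}"
    using exists_sub_size by blast
  have "Delta_out Q w H \<in> {max_dist Q' H | Q'. Q' \<subseteq># Q \<and> size Q' = size Q - w}"
    unfolding Delta_out_def by (rule Min_in[OF Delta_set_finite ne])
  then show ?thesis by auto
qed

lemma dist_set_le: "finite H \<Longrightarrow> q \<in> H \<Longrightarrow> dist_set p H \<le> dist p q"
  unfolding dist_set_def by (rule Min_le) auto

lemma dist_set_attained: "finite H \<Longrightarrow> H \<noteq> {} \<Longrightarrow> \<exists>q\<in>H. dist_set p H = dist p q"
proof -
  assume "finite H" "H \<noteq> {}"
  then have "dist_set p H \<in> (\<lambda>q. dist p q) ` H" unfolding dist_set_def by (intro Min_in) auto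
  then show ?thesis by auto
qed

lemma dist_set_nonneg: "finite H \<Longrightarrow> H \<noteq> {} \<Longrightarrow> dist_set p H \<ge> 0"
proof -
  assume "finite H" "H \<noteq> {}"
  then obtain q where "q \<in> H" "dist_set p H = dist p q" using dist_set_attained by blast
  then show ?thesis by simp
qed

lemma max_dist_nonneg: "finite H \<Longrightarrow> H \<noteq> {} \<Longrightarrow> max_dist Q H \<ge> 0"
proof -
  assume h: "finite H" "H \<noteq> {}"
  show ?thesis
  proof (cases "Q = {#}")
    case False
    then obtain p where p: "p \<in># Q" by blast
    have "dist_set p H \<le> Max ((\<lambda>p. dist_set p H) ` set_mset Q)" using p by (intro Max_ge) auto
    then show ?thesis using False dist_set_nonneg[OF h, of p] by (simp add: max_dist_def)
  qed (simp add: max_dist_def)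
qed

lemma Delta_out_nonneg: "finite H \<Longrightarrow> H \<noteq> {} \<Longrightarrow> Delta_out Q w H \<ge> 0"
proof -
  assume h: "finite H" "H \<noteq> {}"
  obtain Q' where "Delta_out Q w H = max_dist Q' H" using Delta_out_attained[of Q w H] by blast
  then show ?thesis using max_dist_nonneg[OF h, of Q'] by simp
qed

lemma max_dist_le:
  assumes "\<And>p. p \<in># Q \<Longrightarrow> dist_set p H \<le> r" "0 \<le> r"
  shows "max_dist Q H \<le> r"
  using assms by (auto simp: max_dist_def)

lemma dist_set_le_max: "p \<in># Q \<Longrightarrow> dist_set p H \<le> max_dist Q H"
  unfolding max_dist_def by (auto intro!: Max_ge)

lemma kcenter_opt_le:
  assumes "finite C" "card C = k" "k > 0"
  shows "kcenter_opt Q k w \<le> Delta_out Q w C"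
  unfolding kcenter_opt_def
proof (rule cInf_lower)
  show "Delta_out Q w C \<in> {Delta_out Q w C |C. finite C \<and> card C = k}" using assms by auto
  show "bdd_below {Delta_out Q w C |C. finite C \<and> card C = k}"
    using assms by (intro bdd_belowI[of _ 0]) (auto intro!: Delta_out_nonneg)
qed

lemma cnt_update_le: "u \<notin> C \<Longrightarrow> cnt C (xs[i := u]) \<le> cnt C xs"
proof (induction xs arbitrary: i)
  case (Cons x xs)
  then show ?case by (cases i) (auto simp: cnt_Cons)
qed (simp add: cnt_def)

lemma size_filter_cnt: "size (filter_mset (\<lambda>x. x \<in> C) (mset xs)) = cnt C xs"
  by (metis cnt_def mset_filter size_mset)

lemma det_main:
  fixes P :: "'a::euclidean_space set" and H :: "'a set"
  assumes finP: "finite P" and kpos: "k > 0"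
    and cs: "inj_on cs {..<k}"
    and PoptP: "Popt \<subseteq> P" and cardPopt: "card Popt = card P - z"
    and PoptU: "Popt = (\<Union>j<k. Cl j)"
    and clr: "\<forall>j<k. \<forall>p\<in>Cl j. dist p (cs j) \<le> r"
    and r0: "r \<ge> 0" and c1: "c \<ge> 1"
    and Hfin: "finite H" and Hcard: "card H = k"
    and Happ: "Delta_out (mset xs) z' H \<le> c * kcenter_opt (mset xs) k z'"
    and xsP: "set xs \<subseteq> P"
    and Ag: "cnt (P - Popt) xs \<le> z'"
    and Bg: "\<forall>j<k. cnt (Cl j) xs > z'"
  shows "Delta_out (mset_set P) z H \<le> (c + 2) * r"
proof -
  define S where "S = mset xs"
  define cs' where "cs' = cs ` {..<k}"
  have cs'fin: "finite cs'" and cs'card: "card cs' = k" using cs by (auto simp: cs'_def card_image)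
  have Hne: "H \<noteq> {}" using Hcard kpos by auto
  have near: "dist_set p cs' \<le> r" if pP: "p \<in> Popt" for p
  proof -
    obtain j where j: "j < k" "p \<in> Cl j" using pP PoptU by auto
    have "dist_set p cs' \<le> dist p (cs j)" using j cs'fin by (intro dist_set_le) (auto simp: cs'_def)
    also have "\<dots> \<le> r" using clr j by auto
    finally show ?thesis .
  qed
  define ys where "ys = filter (\<lambda>x. x \<in> Popt) xs"
  have len: "length ys + cnt (P - Popt) xs = length xs"
  proof -
    have "filter (\<lambda>x. x \<in> P - Popt) xs = filter (\<lambda>x. \<not> x \<in> Popt) xs"
      using xsP by (intro filter_cong) auto
    then show ?thesis unfolding ys_def cnt_def by (simp add: sum_length_filter_compl)
  qed
  define S1 where "S1 = mset (take (size S - z') ys)"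
  have S1sub: "S1 \<subseteq># S"
  proof -
    have "S1 \<subseteq># mset ys" unfolding S1_def by (rule mset_take_sub)
    also have "mset ys \<subseteq># S" unfolding ys_def S_def by simp
    finally show ?thesis .
  qed
  have S1size: "size S1 = size S - z'" unfolding S1_def S_def using len Ag by simp
  have "Delta_out S z' cs' \<le> max_dist S1 cs'" by (rule Delta_out_le[OF S1sub S1size])
  also have "\<dots> \<le> r"
  proof (rule max_dist_le[OF _ r0])
    fix p assume "p \<in># S1"
    then have "p \<in> set ys" unfolding S1_def by (auto dest: in_set_takeD)
    then show "dist_set p cs' \<le> r" using near by (simp add: ys_def)
  qed
  finally have opt: "kcenter_opt S k z' \<le> r"
    using kcenter_opt_le[OF cs'fin cs'card kpos, of S z'] by simp
  have "Delta_out S z' H \<le> c * r"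
    using Happ opt c1 unfolding S_def[symmetric] by (meson dual_order.trans less_le_trans mult_left_mono zero_less_one less_imp_le)
  obtain S2 where S2sub: "S2 \<subseteq># S" and S2size: "size S2 = size S - z'"
    and S2eq: "Delta_out S z' H = max_dist S2 H"
    using Delta_out_attained by blast
  have S2r: "max_dist S2 H \<le> c * r" using S2eq \<open>Delta_out S z' H \<le> c * r\<close> by simp
  have zS: "z' \<le> size S"
  proof -
    have "z' < cnt (Cl 0) xs" using Bg kpos by auto
    also have "\<dots> \<le> length xs" unfolding cnt_def by simp
    finally show ?thesis by (simp add: S_def)
  qed
  have hit: "\<exists>s. s \<in># S2 \<and> s \<in> Cl j" if j: "j < k" for j
  proof (rule ccontr)
    assume "\<not> (\<exists>s. s \<in># S2 \<and> s \<in> Cl j)"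
    then have e: "filter_mset (\<lambda>x. x \<in> Cl j) S2 = {#}" by auto
    have Ssplit: "S2 + (S - S2) = S" using S2sub by (rule subset_mset.add_diff_inverse)
    have "filter_mset (\<lambda>x. x \<in> Cl j) S = filter_mset (\<lambda>x. x \<in> Cl j) S2 + filter_mset (\<lambda>x. x \<in> Cl j) (S - S2)"
      using filter_union_mset[of "\<lambda>x. x \<in> Cl j" S2 "S - S2"] Ssplit by simp
    then have "filter_mset (\<lambda>x. x \<in> Cl j) S = filter_mset (\<lambda>x. x \<in> Cl j) (S - S2)"
      using e by (metis add_0)
    then have "size (filter_mset (\<lambda>x. x \<in> Cl j) S) \<le> size (S - S2)"
      using size_mset_mono[OF multiset_filter_subset[of "\<lambda>x. x \<in> Cl j" "S - S2"]] by simp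
    also have "\<dots> = z'" using size_Diff_submset[OF S2sub] S2size zS by simp
    finally have "cnt (Cl j) xs \<le> z'" using size_filter_cnt[of "Cl j" xs] by (simp add: S_def)
    then show False using Bg j by auto
  qed
  have close: "dist_set p H \<le> (c + 2) * r" if pP: "p \<in> Popt" for p
  proof -
    obtain j where j: "j < k" "p \<in> Cl j" using pP PoptU by auto
    obtain s where s: "s \<in># S2" "s \<in> Cl j" using hit[OF j(1)] by blast
    obtain h where h: "h \<in> H" "dist_set s H = dist s h" using dist_set_attained[OF Hfin Hne] by blast
    have "dist s h \<le> c * r" using h dist_set_le_max[OF s(1), of H] S2r by simp
    moreover have "dist p (cs j) \<le> r" "dist s (cs j) \<le> r" using clr j s by auto
    moreover have "dist p h \<le> dist p (cs j) + dist (cs j) s + dist s h"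
    proof -
      have "dist p h \<le> dist p (cs j) + dist (cs j) h" by (rule dist_triangle)
      also have "dist (cs j) h \<le> dist (cs j) s + dist s h" by (rule dist_triangle)
      finally show ?thesis by simp
    qed
    ultimately have "dist p h \<le> (c + 2) * r" by (simp add: dist_commute algebra_simps)
    then show ?thesis using dist_set_le[OF Hfin h(1), of p] by simp
  qed
  have finPopt: "finite Popt" using PoptP finP finite_subset by blast
  have "Delta_out (mset_set P) z H \<le> max_dist (mset_set Popt) H"
    using PoptP finP finPopt cardPopt by (intro Delta_out_le) auto
  also have "\<dots> \<le> (c + 2) * r"
    using close finPopt r0 c1 by (intro max_dist_le) auto
  finally show ?thesis .
qed

lemma sum_ind:
  assumes "finite S"
  shows "(\<Sum>x\<in>S. if Pr x then 1 else 0 :: real) = real (card {x\<in>S. Pr x})"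
proof -
  have "(\<Sum>x\<in>S. if Pr x then 1 else 0 :: real) = (\<Sum>x\<in>{x\<in>S. Pr x}. 1)"
    using assms by (simp add: sum.If_cases Int_def conj_commute)
  then show ?thesis by simp
qed

theorem theorem2:
  fixes P :: "'a::euclidean_space set"
    and k z :: nat
    and \<epsilon>1 \<epsilon>2 \<eta> \<delta> c :: real
    and A :: "'a multiset \<Rightarrow> nat \<Rightarrow> 'a set"
  assumes finP: "finite P" and Pne: "P \<noteq> {}"
    and kpos: "k > 0"
    and eps: "\<epsilon>1 > 0" "\<epsilon>2 > 0"
    and sig: "significant P k z \<epsilon>1 \<epsilon>2"
    and eta: "0 < \<eta>" "\<eta> < 1"
    and delta: "0 < \<delta>" "\<delta> < 1"
    and c1: "c \<ge> 1"
    and approx: "\<And>Q w. finite (A Q w) \<and> card (A Q w) = k \<and>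
                        Delta_out Q w (A Q w) \<le> c * kcenter_opt Q k w"
    and ratio: "\<epsilon>1 / \<epsilon>2 > 1 / (\<eta> * (1 - \<delta>))"
  shows
    "let m = nat \<lceil>3 * real k / (\<delta>^2 * \<epsilon>1) * ln (2 * real k / \<eta>)\<rceil>;
         z' = nat \<lfloor>1 / \<eta> * (\<epsilon>2 / real k) * real m\<rfloor>;
         r_opt = kcenter_opt (mset_set P) k z
     in measure_pmf.prob (replicate_pmf m (pmf_of_set P))
          {xs. Delta_out (mset_set P) z (A (mset xs) z') \<le> (c + 2) * r_opt}
        \<ge> (1 - \<eta>)^2"
proof -
  define m where "m = nat \<lceil>3 * real k / (\<delta>^2 * \<epsilon>1) * ln (2 * real k / \<eta>)\<rceil>"
  define y where "y = 1 / \<eta> * (\<epsilon>2 / real k) * real m"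
  define z' where "z' = nat \<lfloor>y\<rfloor>"
  define r where "r = kcenter_opt (mset_set P) k z"
  define n where "n = card P"
  define L where "L = ln (2 * real k / \<eta>)"
  have n0: "n > 0" using finP Pne by (simp add: n_def card_gt_0_iff)
  obtain cs Cl Popt where cs: "inj_on cs {..<k}"
    and rdef: "Delta_out (mset_set P) z (cs ` {..<k}) = r"
    and PoptP: "Popt \<subseteq> P" and cardPopt: "card Popt = n - z"
    and PoptU: "Popt = (\<Union>j<k. Cl j)"
    and disj: "\<forall>i<k. \<forall>j<k. i \<noteq> j \<longrightarrow> Cl i \<inter> Cl j = {}"
    and clr: "\<forall>j<k. \<forall>p\<in>Cl j. dist p (cs j) \<le> r"
    and clsize: "\<forall>j<k. real (card (Cl j)) \<ge> \<epsilon>1 / real k * real n"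
    and zdef: "real z = \<epsilon>2 / real k * real n"
    using sig unfolding significant_def Let_def r_def n_def by blast
  have r0: "r \<ge> 0"
    using rdef Delta_out_nonneg[of "cs ` {..<k}" "mset_set P" z] kpos by auto
  have ClP: "Cl j \<subseteq> Popt" if jk: "j < k" for j
  proof -
    have "Cl j \<subseteq> (\<Union>j<k. Cl j)" using jk by blast
    then show ?thesis using PoptU by simp
  qed
  have finCl: "finite (Cl j)" if jk: "j < k" for j
    using finite_subset[OF subset_trans[OF ClP[OF jk] PoptP] finP] .
  have clpos: "card (Cl j) > 0" if "j < k" for j
  proof -
    have "\<epsilon>1 / real k * real n > 0" using eps kpos n0 by simp
    then have "real (card (Cl j)) > 0" using clsize that by (meson less_le_trans)
    then show ?thesis by simp
  qed
  have "card Popt > 0"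
  proof -
    have "card (Cl 0) \<le> card Popt"
      using ClP[OF kpos] PoptP finP by (intro card_mono) (auto intro: finite_subset)
    then show ?thesis using clpos[OF kpos] by simp
  qed
  then have zn: "z < n" using cardPopt by simp
  define Ou where "Ou = P - Popt"
  have OuP: "Ou \<subseteq> P" by (auto simp: Ou_def)
  have cardOu: "card Ou = z"
    unfolding Ou_def using PoptP finP cardPopt zn
    by (subst card_Diff_subset) (auto intro: finite_subset simp: n_def)
  have L0: "L > 0" unfolding L_def using kpos eta by simp
  have mL: "real m \<ge> 3 * real k / (\<delta>^2 * \<epsilon>1) * L"
    unfolding m_def L_def by (rule real_nat_ceiling_ge)
  have y0: "y \<ge> 0" unfolding y_def using eta eps kpos by simp
  have fy: "real z' = real_of_int \<lfloor>y\<rfloor>" unfolding z'_def using y0 by simp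
  have z'y: "real z' \<le> y" "y < real z' + 1" unfolding fy by linarith+
  have e21: "\<epsilon>2 / \<eta> \<le> (1 - \<delta>) * \<epsilon>1"
  proof -
    have pos: "\<eta> * (1 - \<delta>) > 0" using eta delta by simp
    have "1 / (\<eta> * (1 - \<delta>)) < \<epsilon>1 / \<epsilon>2" using ratio by simp
    then have "\<epsilon>2 < \<epsilon>1 * (\<eta> * (1 - \<delta>))" using pos eps by (simp add: field_simps)
    then show ?thesis using eta by (simp add: field_simps)
  qed
  define EA where "EA = {xs\<in>Ls P m. cnt Ou xs \<le> z'}"
  define EB where "EB = {xs\<in>Ls P m. \<forall>j<k. z' < cnt (Cl j) xs}"
  have finLs: "finite (Ls P m)" using finP by (rule finite_Ls)
  have cardLs: "card (Ls P m) = n ^ m" using finP by (simp add: card_Ls n_def)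
  have harr: "real (card EA) * real (card EB) \<le> real n ^ m * real (card (EA \<inter> EB))"
  proof -
    have H: "(\<Sum>xs\<in>Ls P m. (\<lambda>c. if c \<le> z' then 1 else 0 :: real) (cnt Ou xs)) *
             (\<Sum>xs\<in>Ls P m. (\<lambda>xs. if \<forall>j<k. z' < cnt (Cl j) xs then 1 else 0 :: real) xs)
           \<le> real (card P) ^ m * (\<Sum>xs\<in>Ls P m. (\<lambda>c. if c \<le> z' then 1 else 0 :: real) (cnt Ou xs) *
                (\<lambda>xs. if \<forall>j<k. z' < cnt (Cl j) xs then 1 else 0 :: real) xs)"
    proof (rule harris[OF finP OuP, rule_format])
      show "(if b \<le> z' then 1 else 0 :: real) \<le> (if a \<le> z' then 1 else 0)" if "a \<le> b" for a b
        using that by auto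
      show "(if \<forall>j<k. z' < cnt (Cl j) (xs[i := u]) then 1 else 0 :: real)
            \<le> (if \<forall>j<k. z' < cnt (Cl j) xs then 1 else 0)"
        if "xs \<in> Ls P m" "i < m" "u \<in> Ou" for xs i u
      proof -
        have "cnt (Cl j) (xs[i := u]) \<le> cnt (Cl j) xs" if "j < k" for j
          using \<open>u \<in> Ou\<close> ClP[OF that] by (intro cnt_update_le) (auto simp: Ou_def)
        then show ?thesis by (auto simp: less_le_trans)
      qed
    qed
    have "(\<Sum>xs\<in>Ls P m. (\<lambda>c. if c \<le> z' then 1 else 0 :: real) (cnt Ou xs)) = real (card EA)"
      unfolding EA_def using finLs by (simp add: sum_ind)
    moreover have "(\<Sum>xs\<in>Ls P m. (\<lambda>xs. if \<forall>j<k. z' < cnt (Cl j) xs then 1 else 0 :: real) xs) = real (card EB)"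
      unfolding EB_def using finLs by (simp add: sum_ind)
    moreover have "(\<Sum>xs\<in>Ls P m. (\<lambda>c. if c \<le> z' then 1 else 0 :: real) (cnt Ou xs) *
                (\<lambda>xs. if \<forall>j<k. z' < cnt (Cl j) xs then 1 else 0 :: real) xs) = real (card (EA \<inter> EB))"
    proof -
      have "(\<Sum>xs\<in>Ls P m. (\<lambda>c. if c \<le> z' then 1 else 0 :: real) (cnt Ou xs) *
                (\<lambda>xs. if \<forall>j<k. z' < cnt (Cl j) xs then 1 else 0 :: real) xs)
            = (\<Sum>xs\<in>Ls P m. if cnt Ou xs \<le> z' \<and> (\<forall>j<k. z' < cnt (Cl j) xs) then 1 else 0)"
        by (intro sum.cong) auto
      also have "\<dots> = real (card {xs\<in>Ls P m. cnt Ou xs \<le> z' \<and> (\<forall>j<k. z' < cnt (Cl j) xs)})"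
        using finLs by (rule sum_ind)
      also have "{xs\<in>Ls P m. cnt Ou xs \<le> z' \<and> (\<forall>j<k. z' < cnt (Cl j) xs)} = EA \<inter> EB"
        unfolding EA_def EB_def by auto
      finally show ?thesis .
    qed
    ultimately show ?thesis using H by (simp add: n_def)
  qed
  have nm0: "real n ^ m > 0" using n0 by simp
  have PA: "real (card EA) \<ge> (1 - \<eta>) * real n ^ m"
  proof -
    define X where "X = card {xs\<in>Ls P m. cnt Ou xs \<ge> z' + 1}"
    have cX: "real n * real X * real (z' + 1) \<le> real m * real z * real n ^ m"
      using card_ge_cnt[OF finP OuP, of "z' + 1" m] cardOu by (simp add: X_def n_def)
    have "real m * real z = \<eta> * y * real n"
      unfolding y_def zdef using eta kpos by (simp add: field_simps)
    then have "real n * (real X * real (z' + 1)) \<le> real n * (\<eta> * y * real n ^ m)"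
      using cX by (simp add: algebra_simps)
    then have "real X * real (z' + 1) \<le> \<eta> * y * real n ^ m" using n0 by simp
    also have "\<dots> \<le> \<eta> * real (z' + 1) * real n ^ m"
      using z'y eta nm0 by (intro mult_right_mono mult_left_mono) auto
    finally have h: "real X * real (z' + 1) \<le> (\<eta> * real n ^ m) * real (z' + 1)" by (simp add: ac_simps)
    have "real X \<le> \<eta> * real n ^ m"
      using mult_le_cancel_right_pos[of "real (z' + 1)" "real X" "\<eta> * real n ^ m"] h by simp
    moreover have "Ls P m - EA = {xs\<in>Ls P m. cnt Ou xs \<ge> z' + 1}" by (auto simp: EA_def)
    moreover have "card (Ls P m - EA) = card (Ls P m) - card EA"
      by (rule card_Diff_subset) (use finLs in \<open>auto simp: EA_def intro: finite_subset\<close>)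
    moreover have "card EA \<le> card (Ls P m)" using finLs by (intro card_mono) (auto simp: EA_def)
    ultimately have "real (n ^ m) - real (card EA) \<le> \<eta> * real n ^ m"
      unfolding X_def using cardLs by (simp add: of_nat_diff)
    then show ?thesis by (simp add: algebra_simps)
  qed
  have PBj: "real (card {xs\<in>Ls P m. cnt (Cl j) xs \<le> z'}) \<le> \<eta> / (2 * real k) * real n ^ m"
    if jk: "j < k" for j
  proof -
    define \<mu> where "\<mu> = real m * real (card (Cl j)) / real (card P)"
    have mu1: "\<mu> \<ge> real m * \<epsilon>1 / real k"
    proof -
      have "real m * (\<epsilon>1 / real k * real n) \<le> real m * real (card (Cl j))"
        using clsize jk by (intro mult_left_mono) auto
      then show ?thesis using n0 unfolding \<mu>_def n_def[symmetric] by (simp add: field_simps)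
    qed
    have a: "real z' \<le> (1 - \<delta>) * \<mu>"
    proof -
      have "y = \<epsilon>2 / \<eta> * (real m / real k)" unfolding y_def by (simp add: field_simps)
      also have "\<dots> \<le> (1 - \<delta>) * \<epsilon>1 * (real m / real k)"
        using e21 kpos by (intro mult_right_mono) auto
      also have "\<dots> = (1 - \<delta>) * (real m * \<epsilon>1 / real k)" by simp
      also have "\<dots> \<le> (1 - \<delta>) * \<mu>" using mu1 delta by (intro mult_left_mono) auto
      finally show ?thesis using z'y by simp
    qed
    have ch: "real (card {xs\<in>Ls P m. cnt (Cl j) xs \<le> z'}) / real (card P) ^ m \<le> exp (- (\<delta>^2) * \<mu> / 2)"
      using ClP[OF jk] PoptP delta a \<mu>_def by (intro chernoff[OF finP Pne]) auto
    have "\<delta>^2 * \<mu> \<ge> 3 * L"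
    proof -
      have "\<delta>^2 * \<mu> \<ge> \<delta>^2 * (real m * \<epsilon>1 / real k)" using mu1 by (intro mult_left_mono) auto
      moreover have "\<delta>^2 * (real m * \<epsilon>1 / real k) \<ge> \<delta>^2 * (3 * real k / (\<delta>^2 * \<epsilon>1) * L * \<epsilon>1 / real k)"
        using mL eps kpos by (intro mult_left_mono divide_right_mono mult_right_mono) auto
      moreover have "\<delta>^2 * (3 * real k / (\<delta>^2 * \<epsilon>1) * L * \<epsilon>1 / real k) = 3 * L"
        using delta eps kpos by (simp add: field_simps)
      ultimately show ?thesis by linarith
    qed
    then have "exp (- (\<delta>^2) * \<mu> / 2) \<le> exp (- L)" using L0 by simp
    also have "exp (- L) = \<eta> / (2 * real k)"
      unfolding L_def using eta kpos by (simp add: exp_minus ln_div exp_diff)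
    finally have "real (card {xs\<in>Ls P m. cnt (Cl j) xs \<le> z'}) / real n ^ m \<le> \<eta> / (2 * real k)"
      using ch by (simp add: n_def)
    then show ?thesis using nm0 by (simp add: field_simps)
  qed
  have PB: "real (card EB) \<ge> (1 - \<eta>) * real n ^ m"
  proof -
    have "Ls P m - EB \<subseteq> (\<Union>j<k. {xs\<in>Ls P m. cnt (Cl j) xs \<le> z'})"
    proof
      fix xs assume "xs \<in> Ls P m - EB"
      then have "xs \<in> Ls P m" "\<not> (\<forall>j<k. z' < cnt (Cl j) xs)" by (auto simp: EB_def)
      then obtain j where "j < k" "cnt (Cl j) xs \<le> z'" "xs \<in> Ls P m" by (auto simp: not_less)
      then show "xs \<in> (\<Union>j<k. {xs\<in>Ls P m. cnt (Cl j) xs \<le> z'})" by blast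
    qed
    then have "card (Ls P m - EB) \<le> card (\<Union>j<k. {xs\<in>Ls P m. cnt (Cl j) xs \<le> z'})"
      using finLs by (intro card_mono) auto
    also have "\<dots> \<le> (\<Sum>j<k. card {xs\<in>Ls P m. cnt (Cl j) xs \<le> z'})"
      by (rule card_UN_le) simp
    finally have "real (card (Ls P m - EB)) \<le> real (\<Sum>j<k. card {xs\<in>Ls P m. cnt (Cl j) xs \<le> z'})"
      by (simp only: of_nat_le_iff)
    also have "\<dots> = (\<Sum>j<k. real (card {xs\<in>Ls P m. cnt (Cl j) xs \<le> z'}))"
      by (rule of_nat_sum)
    also have "\<dots> \<le> (\<Sum>j<k. \<eta> / (2 * real k) * real n ^ m)"
      using PBj by (intro sum_mono) auto
    also have "\<dots> = \<eta> / 2 * real n ^ m" using kpos by simp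
    also have "\<dots> \<le> \<eta> * real n ^ m" using eta nm0 by simp
    finally have X: "real (card (Ls P m - EB)) \<le> \<eta> * real n ^ m" .
    moreover have "card (Ls P m - EB) = card (Ls P m) - card EB"
      by (rule card_Diff_subset) (use finLs in \<open>auto simp: EB_def intro: finite_subset\<close>)
    moreover have "card EB \<le> card (Ls P m)" using finLs by (intro card_mono) (auto simp: EB_def)
    ultimately have "real (n ^ m) - real (card EB) \<le> \<eta> * real n ^ m"
      using cardLs by (simp add: of_nat_diff)
    then show ?thesis by (simp add: algebra_simps)
  qed
  define E where "E = {xs. Delta_out (mset_set P) z (A (mset xs) z') \<le> (c + 2) * r}"
  have sub: "EA \<inter> EB \<subseteq> Ls P m \<inter> E"
  proof
    fix xs assume xs: "xs \<in> EA \<inter> EB"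
    then have xsP: "set xs \<subseteq> P" by (auto simp: EA_def Ls_def)
    have "Delta_out (mset_set P) z (A (mset xs) z') \<le> (c + 2) * r"
    proof (rule det_main[OF finP kpos cs PoptP _ PoptU clr r0 c1])
      show "card Popt = card P - z" using cardPopt by (simp add: n_def)
      show "finite (A (mset xs) z')" "card (A (mset xs) z') = k"
        "Delta_out (mset xs) z' (A (mset xs) z') \<le> c * kcenter_opt (mset xs) k z'"
        using approx by auto
      show "set xs \<subseteq> P" by fact
      show "cnt (P - Popt) xs \<le> z'" using xs by (simp add: EA_def Ou_def)
      show "\<forall>j<k. z' < cnt (Cl j) xs" using xs by (simp add: EB_def)
    qed
    then show "xs \<in> Ls P m \<inter> E" using xs by (auto simp: E_def EA_def)
  qed
  have "real (card (EA \<inter> EB)) \<le> real (card (Ls P m \<inter> E))"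
    using sub finLs by (simp add: card_mono)
  have prob: "measure_pmf.prob (replicate_pmf m (pmf_of_set P)) E = real (card (Ls P m \<inter> E)) / real n ^ m"
    using prob_replicate[OF finP Pne] by (simp add: n_def)
  have "(1 - \<eta>)^2 * (real n ^ m * real n ^ m) = ((1 - \<eta>) * real n ^ m) * ((1 - \<eta>) * real n ^ m)"
    by (simp add: power2_eq_square algebra_simps)
  also have "\<dots> \<le> real (card EA) * real (card EB)"
    using PA PB eta nm0 by (intro mult_mono) auto
  also have "\<dots> \<le> real n ^ m * real (card (EA \<inter> EB))" by (rule harr)
  also have "\<dots> \<le> real n ^ m * real (card (Ls P m \<inter> E))"
    using \<open>real (card (EA \<inter> EB)) \<le> real (card (Ls P m \<inter> E))\<close> nm0 by simp
  finally have "(1 - \<eta>)^2 \<le> real (card (Ls P m \<inter> E)) / real n ^ m"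
    using nm0 by (simp add: field_simps)
  then show ?thesis
    unfolding Let_def m_def[symmetric] y_def[symmetric] z'_def[symmetric] r_def[symmetric] E_def[symmetric] prob .
qed

end
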